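(* Let $|\cdot|$ denote the Euclidean norm on $\mathbb{R}^n$ and $\langle\cdot,\cdot\rangle$ the Euclidean inner product. Let $l_0,l_1,\bar l_0,\bar l_1\in\mathbb{R}^n$ satisfy the two sticks condition $$|l_1-\bar l_0|\ge |l_1-l_0|\quad\text{and}\quad |\bar l_1-l_0|\ge |\bar l_1-\bar l_0|.$$ Then $$\langle l_1-\bar l_1,\ l_0-\bar l_0\rangle\ge 0.$$ Consequently, for every $0\le t\le 1$, writing $l_t=(1-t)l_0+tl_1$ and $\bar l_t=(1-t)\bar l_0+t\bar l_1$, $$(1-t)^2|l_0-\bar l_0|^2+t^2|l_1-\bar l_1|^2\le |l_t-\bar l_t|^2.$$
   Context: The points $l_0,l_1$ are the initial and terminal points of the directed segment ("stick") $[l_0,l_1]$, and similarly for $[\bar l_0,\bar l_1]$; the sticks need not have equal length. *)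

theory Defs
  imports "HOL-Analysis.Analysis"
begin

end

theory Submission
  imports Defs
begin

theorem proposition3p1:
  fixes l0 l1 lb0 lb1 :: "real ^ 'n"
  assumes "norm (l1 - lb0) \<ge> norm (l1 - l0)"
      and "norm (lb1 - l0) \<ge> norm (lb1 - lb0)"
  shows "inner (l1 - lb1) (l0 - lb0) \<ge> 0 \<and>
         (\<forall>t::real. 0 \<le> t \<and> t \<le> 1 \<longrightarrow>
            (1 - t)^2 * (norm (l0 - lb0))^2 + t^2 * (norm (l1 - lb1))^2
              \<le> (norm (((1 - t) *\<^sub>R l0 + t *\<^sub>R l1) - ((1 - t) *\<^sub>R lb0 + t *\<^sub>R lb1)))^2)"
proof -
  have h1: "(norm (l1 - l0))^2 \<le> (norm (l1 - lb0))^2" using assms(1) by (simp add: power_mono)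
  have h2: "(norm (lb1 - lb0))^2 \<le> (norm (lb1 - l0))^2" using assms(2) by (simp add: power_mono)
  have key: "2 * inner (l1 - lb1) (l0 - lb0) = (norm (l1 - lb0))^2 + (norm (lb1 - l0))^2
      - (norm (l1 - l0))^2 - (norm (lb1 - lb0))^2"
    by (simp add: power2_norm_eq_inner inner_diff_left inner_diff_right inner_commute algebra_simps)
  have I: "inner (l1 - lb1) (l0 - lb0) \<ge> 0" using key h1 h2 by linarith
  have "\<forall>t::real. 0 \<le> t \<and> t \<le> 1 \<longrightarrow>
            (1 - t)^2 * (norm (l0 - lb0))^2 + t^2 * (norm (l1 - lb1))^2
              \<le> (norm (((1 - t) *\<^sub>R l0 + t *\<^sub>R l1) - ((1 - t) *\<^sub>R lb0 + t *\<^sub>R lb1)))^2"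
  proof (intro allI impI)
    fix t :: real assume t: "0 \<le> t \<and> t \<le> 1"
    define u where "u = l0 - lb0"
    define v where "v = l1 - lb1"
    have e: "((1 - t) *\<^sub>R l0 + t *\<^sub>R l1) - ((1 - t) *\<^sub>R lb0 + t *\<^sub>R lb1) = (1-t) *\<^sub>R u + t *\<^sub>R v"
      by (simp add: u_def v_def algebra_simps)
    have sq: "(norm ((1-t) *\<^sub>R u + t *\<^sub>R v))^2 = (1-t)^2 * (norm u)^2 + t^2 * (norm v)^2 + 2*t*(1-t) * inner v u"
      unfolding power2_norm_eq_inner by (simp add: inner_add_left inner_add_right inner_commute algebra_simps power2_eq_square)
    have "0 \<le> 2*t*(1-t) * inner v u" using t I by (simp add: u_def v_def)
    then show "(1 - t)^2 * (norm (l0 - lb0))^2 + t^2 * (norm (l1 - lb1))^2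
              \<le> (norm (((1 - t) *\<^sub>R l0 + t *\<^sub>R l1) - ((1 - t) *\<^sub>R lb0 + t *\<^sub>R lb1)))^2"
      unfolding e sq by (simp add: u_def v_def)
  qed
  with I show ?thesis by blast
qed

end
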